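(* Let $\mathcal{R}$ be a commutative ring with unity, $P$ a connected locally finite poset in which every maximal chain has at least three elements, and $b$ an additive biderivation of $I(P,\mathcal{R})$. Let $r_1,r_2\in\mathcal{R}$ and $x\le y$, $u\le v$ in $P$ be such that any two of $x,y,u,v$ are comparable, $x\neq v$ and $y\neq u$. Then $b(r_1e_{xy},r_2e_{uv})=0$, except possibly in the case where $x=y\neq u=v$ and one of $x,u$ is a maximal element of $P$ and the other is a minimal element of $P$.
   Context: $I(P,\mathcal{R})$ is the incidence algebra: functions $f:P\times P\to\mathcal{R}$ with $f(x,y)=0$ unless $x\le y$, with product $(fg)(x,y)=\sum_{x\le z\le y}f(x,z)g(z,y)$; $e_{xy}$ ($x\le y$) is the function equal to $1$ at $(x,y)$ and $0$ elsewhere. An additive biderivation is a map $b$ of two arguments, additive in each, with $b(\alpha\beta,\gamma)=\alpha b(\beta,\gamma)+b(\alpha,\gamma)\beta$ and $b(\alpha,\beta\gamma)=\beta b(\alpha,\gamma)+b(\alpha,\beta)\gamma$. $P$ is connected if any two elements are joined by a finite sequence of successively comparable elements. A maximal chain is a totally ordered subset to which no element of $P$ can be added keeping it totally ordered. *)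

theory Defs
  imports Main
begin

text \<open>The poset P is the carrier type 'a with its order; the ring R is the type 'r.
  Elements of the incidence algebra are represented as functions 'a => 'a => 'r.\<close>

definition locally_finite_poset :: "'a::order itself \<Rightarrow> bool" where
  "locally_finite_poset _ \<longleftrightarrow> (\<forall>x y::'a. finite {x..y})"

definition incidence_algebra :: "('a::order \<Rightarrow> 'a \<Rightarrow> 'r::comm_ring_1) set" where
  "incidence_algebra = {f. \<forall>x y. \<not> x \<le> y \<longrightarrow> f x y = 0}"

definition inc_add :: "('a::order \<Rightarrow> 'a \<Rightarrow> 'r::comm_ring_1) \<Rightarrow> ('a \<Rightarrow> 'a \<Rightarrow> 'r) \<Rightarrow> ('a \<Rightarrow> 'a \<Rightarrow> 'r)" where
  "inc_add f g = (\<lambda>x y. f x y + g x y)"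

definition inc_mult :: "('a::order \<Rightarrow> 'a \<Rightarrow> 'r::comm_ring_1) \<Rightarrow> ('a \<Rightarrow> 'a \<Rightarrow> 'r) \<Rightarrow> ('a \<Rightarrow> 'a \<Rightarrow> 'r)" where
  "inc_mult f g = (\<lambda>x y. \<Sum>z\<in>{x..y}. f x z * g z y)"

definition scaled_unit :: "'r::comm_ring_1 \<Rightarrow> 'a::order \<Rightarrow> 'a \<Rightarrow> ('a \<Rightarrow> 'a \<Rightarrow> 'r)" where
  "scaled_unit r x y = (\<lambda>a b. if a = x \<and> b = y then r else 0)"

definition additive_biderivation ::
  "(('a::order \<Rightarrow> 'a \<Rightarrow> 'r::comm_ring_1) \<Rightarrow> ('a \<Rightarrow> 'a \<Rightarrow> 'r) \<Rightarrow> ('a \<Rightarrow> 'a \<Rightarrow> 'r)) \<Rightarrow> bool" where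
  "additive_biderivation b \<longleftrightarrow>
     (\<forall>\<alpha>\<in>incidence_algebra. \<forall>\<beta>\<in>incidence_algebra. b \<alpha> \<beta> \<in> incidence_algebra) \<and>
     (\<forall>\<alpha>\<in>incidence_algebra. \<forall>\<beta>\<in>incidence_algebra. \<forall>\<gamma>\<in>incidence_algebra.
        b (inc_add \<alpha> \<beta>) \<gamma> = inc_add (b \<alpha> \<gamma>) (b \<beta> \<gamma>) \<and>
        b \<alpha> (inc_add \<beta> \<gamma>) = inc_add (b \<alpha> \<beta>) (b \<alpha> \<gamma>) \<and>
        b (inc_mult \<alpha> \<beta>) \<gamma> = inc_add (inc_mult \<alpha> (b \<beta> \<gamma>)) (inc_mult (b \<alpha> \<gamma>) \<beta>) \<and>
        b \<alpha> (inc_mult \<beta> \<gamma>) = inc_add (inc_mult \<beta> (b \<alpha> \<gamma>)) (inc_mult (b \<alpha> \<beta>) \<gamma>))"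

definition connected_poset :: "'a::order itself \<Rightarrow> bool" where
  "connected_poset _ \<longleftrightarrow> (\<forall>x y::'a. (\<lambda>a b. a \<le> b \<or> b \<le> a)\<^sup>*\<^sup>* x y)"

definition maximal_chain :: "'a::order set \<Rightarrow> bool" where
  "maximal_chain C \<longleftrightarrow> Complete_Partial_Order.chain (\<le>) C \<and>
     (\<forall>z. Complete_Partial_Order.chain (\<le>) (insert z C) \<longrightarrow> z \<in> C)"

definition has_three_elements :: "'a set \<Rightarrow> bool" where
  "has_three_elements C \<longleftrightarrow> (\<exists>a\<in>C. \<exists>b\<in>C. \<exists>c\<in>C. a \<noteq> b \<and> a \<noteq> c \<and> b \<noteq> c)"

definition is_maximal_elem :: "'a::order \<Rightarrow> bool" where
  "is_maximal_elem x \<longleftrightarrow> (\<forall>z. x \<le> z \<longrightarrow> z = x)"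

definition is_minimal_elem :: "'a::order \<Rightarrow> bool" where
  "is_minimal_elem x \<longleftrightarrow> (\<forall>z. z \<le> x \<longrightarrow> z = x)"

definition comparable :: "'a::order \<Rightarrow> 'a \<Rightarrow> bool" where
  "comparable a b \<longleftrightarrow> a \<le> b \<or> b \<le> a"

end

theory Submission
  imports Defs
begin

lemma unit_in: "p \<le> q \<Longrightarrow> scaled_unit r p q \<in> incidence_algebra"
  by (auto simp: scaled_unit_def incidence_algebra_def)

lemma mult_in: "inc_mult f g \<in> incidence_algebra"
  by (auto simp: inc_mult_def incidence_algebra_def)

lemma inI: "K \<in> incidence_algebra \<Longrightarrow> \<not> a \<le> c \<Longrightarrow> K a c = 0"
  by (auto simp: incidence_algebra_def)

lemma mult_unit_left:
  fixes p q a c :: "'a::order" and K :: "'a \<Rightarrow> 'a \<Rightarrow> 'r::comm_ring_1"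
  assumes lf: "\<And>x y::'a. finite {x..y}" and "p \<le> q" "K \<in> incidence_algebra"
  shows "inc_mult (scaled_unit r p q) K a c = (if a = p then r * K q c else 0)"
proof (cases "a = p \<and> q \<le> c")
  case True
  then have "inc_mult (scaled_unit r p q) K a c = (\<Sum>z\<in>{a..c}. if z = q then r * K q c else 0)"
    unfolding inc_mult_def scaled_unit_def by (intro sum.cong) auto
  also have "\<dots> = r * K q c" using True assms sum.delta[OF lf[of a c], of q "\<lambda>_. r * K q c"] by simp
  finally show ?thesis using True by simp
next
  case False
  then have "inc_mult (scaled_unit r p q) K a c = 0"
    unfolding inc_mult_def scaled_unit_def by (intro sum.neutral) auto
  then show ?thesis using False assms inI[of K q c] by auto
qed

lemma mult_unit_right:
  fixes p q a c :: "'a::order" and K :: "'a \<Rightarrow> 'a \<Rightarrow> 'r::comm_ring_1"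
  assumes lf: "\<And>x y::'a. finite {x..y}" and "p \<le> q" "K \<in> incidence_algebra"
  shows "inc_mult K (scaled_unit r p q) a c = (if c = q then K a p * r else 0)"
proof (cases "c = q \<and> a \<le> p")
  case True
  then have "inc_mult K (scaled_unit r p q) a c = (\<Sum>z\<in>{a..c}. if z = p then K a p * r else 0)"
    unfolding inc_mult_def scaled_unit_def by (intro sum.cong) auto
  also have "\<dots> = K a p * r" using True assms sum.delta[OF lf[of a c], of p "\<lambda>_. K a p * r"] by simp
  finally show ?thesis using True by simp
next
  case False
  then have "inc_mult K (scaled_unit r p q) a c = 0"
    unfolding inc_mult_def scaled_unit_def by (intro sum.neutral) auto
  then show ?thesis using False assms inI[of K a p] by auto
qed

lemma assoc:
  assumes lf: "\<And>x y::'a::order. finite {x..y}"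
    and f: "f \<in> incidence_algebra" and g: "g \<in> incidence_algebra" and h: "(h::'a\<Rightarrow>'a\<Rightarrow>'r::comm_ring_1) \<in> incidence_algebra"
  shows "inc_mult (inc_mult f g) h = inc_mult f (inc_mult g h)"
proof (intro ext)
  fix a c :: 'a
  have L: "inc_mult (inc_mult f g) h a c = (\<Sum>z\<in>{a..c}. \<Sum>w\<in>{a..c}. f a w * g w z * h z c)"
    unfolding inc_mult_def sum_distrib_right
  proof (rule sum.cong[OF refl])
    fix z assume z: "z \<in> {a..c}"
    show "(\<Sum>w\<in>{a..z}. f a w * g w z * h z c) = (\<Sum>w\<in>{a..c}. f a w * g w z * h z c)"
      apply (rule sum.mono_neutral_left)
      using z lf inI[OF g] by (auto intro: order_trans)
  qed
  have R: "inc_mult f (inc_mult g h) a c = (\<Sum>w\<in>{a..c}. \<Sum>z\<in>{a..c}. f a w * g w z * h z c)"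
    unfolding inc_mult_def sum_distrib_left
  proof (rule sum.cong[OF refl])
    fix w assume w: "w \<in> {a..c}"
    show "(\<Sum>z\<in>{w..c}. f a w * (g w z * h z c)) = (\<Sum>z\<in>{a..c}. f a w * g w z * h z c)"
      apply (rule sum.mono_neutral_cong_left)
      using w lf inI[OF g] by (auto intro: order_trans simp: mult.assoc)
  qed
  show "inc_mult (inc_mult f g) h a c = inc_mult f (inc_mult g h) a c"
    unfolding L R by (rule sum.swap)
qed

lemma distL: "inc_mult f (inc_add g h) = inc_add (inc_mult f g) (inc_mult f h)"
  by (auto simp: inc_mult_def inc_add_def distrib_left sum.distrib)
lemma distR: "inc_mult (inc_add g h) f = inc_add (inc_mult g f) (inc_mult h f)"
  by (auto simp: inc_mult_def inc_add_def distrib_right sum.distrib)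

lemma add_in: "f \<in> incidence_algebra \<Longrightarrow> g \<in> incidence_algebra \<Longrightarrow> inc_add f g \<in> incidence_algebra"
  by (auto simp: inc_add_def incidence_algebra_def)

lemma bd_in: "additive_biderivation b \<Longrightarrow> \<alpha> \<in> incidence_algebra \<Longrightarrow> \<beta> \<in> incidence_algebra \<Longrightarrow> b \<alpha> \<beta> \<in> incidence_algebra"
  by (simp add: additive_biderivation_def)
lemma bd_L: "additive_biderivation b \<Longrightarrow> \<alpha> \<in> incidence_algebra \<Longrightarrow> \<beta> \<in> incidence_algebra \<Longrightarrow> \<gamma> \<in> incidence_algebra \<Longrightarrow>
   b (inc_mult \<alpha> \<beta>) \<gamma> = inc_add (inc_mult \<alpha> (b \<beta> \<gamma>)) (inc_mult (b \<alpha> \<gamma>) \<beta>)"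
  by (simp add: additive_biderivation_def)
lemma bd_R: "additive_biderivation b \<Longrightarrow> \<alpha> \<in> incidence_algebra \<Longrightarrow> \<beta> \<in> incidence_algebra \<Longrightarrow> \<gamma> \<in> incidence_algebra \<Longrightarrow>
   b \<alpha> (inc_mult \<beta> \<gamma>) = inc_add (inc_mult \<beta> (b \<alpha> \<gamma>)) (inc_mult (b \<alpha> \<beta>) \<gamma>)"
  by (simp add: additive_biderivation_def)

lemma bresar:
  fixes b :: "('a::order \<Rightarrow> 'a \<Rightarrow> 'r::comm_ring_1) \<Rightarrow> ('a \<Rightarrow> 'a \<Rightarrow> 'r) \<Rightarrow> ('a \<Rightarrow> 'a \<Rightarrow> 'r)"
  assumes lf: "\<And>p q::'a. finite {p..q}" and bd: "additive_biderivation b"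
    and I: "x \<in> incidence_algebra" "u \<in> incidence_algebra" "v \<in> incidence_algebra" "y \<in> incidence_algebra"
  shows "inc_mult (inc_mult x v) (b u y) a c - inc_mult (inc_mult v x) (b u y) a c =
         inc_mult (b x v) (inc_mult u y) a c - inc_mult (b x v) (inc_mult y u) a c"
proof -
  define B1 where "B1 = b u y"
  define B2 where "B2 = b u v"
  define B3 where "B3 = b x y"
  define B4 where "B4 = b x v"
  have BI: "B1 \<in> incidence_algebra" "B2 \<in> incidence_algebra" "B3 \<in> incidence_algebra" "B4 \<in> incidence_algebra"
    unfolding B1_def B2_def B3_def B4_def using bd_in[OF bd] I by auto
  note A = assoc[OF lf]
  have E1: "b (inc_mult x u) (inc_mult v y) = inc_add (inc_add (inc_mult x (inc_mult v B1)) (inc_mult x (inc_mult B2 y))) (inc_add (inc_mult v (inc_mult B3 u)) (inc_mult B4 (inc_mult y u)))"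
    using I BI
    apply (subst bd_L[OF bd])
    by (simp_all add: bd_R[OF bd] mult_in B1_def[symmetric] B2_def[symmetric] B3_def[symmetric] B4_def[symmetric] distL distR A)
  have E2: "b (inc_mult x u) (inc_mult v y) = inc_add (inc_add (inc_mult v (inc_mult x B1)) (inc_mult v (inc_mult B3 u))) (inc_add (inc_mult x (inc_mult B2 y)) (inc_mult B4 (inc_mult u y)))"
    using I BI
    apply (subst bd_R[OF bd])
    by (simp_all add: bd_L[OF bd] mult_in B1_def[symmetric] B2_def[symmetric] B3_def[symmetric] B4_def[symmetric] distL distR A)
  have "inc_add (inc_add (inc_mult x (inc_mult v B1)) (inc_mult x (inc_mult B2 y))) (inc_add (inc_mult v (inc_mult B3 u)) (inc_mult B4 (inc_mult y u))) a c
     = inc_add (inc_add (inc_mult v (inc_mult x B1)) (inc_mult v (inc_mult B3 u))) (inc_add (inc_mult x (inc_mult B2 y)) (inc_mult B4 (inc_mult u y))) a c"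
    using E1 E2 by simp
  then show ?thesis unfolding inc_add_def B1_def[symmetric] B4_def[symmetric] using I BI by (simp add: algebra_simps A)
qed

lemma mult_zero_right: "inc_mult K (\<lambda>_ _. 0) = (\<lambda>_ _. 0)"
  by (simp add: inc_mult_def)
lemma mult_zero_left: "inc_mult (\<lambda>_ _. 0) K = (\<lambda>_ _. 0)"
  by (simp add: inc_mult_def)

lemma minmax:
  fixes b :: "('a::order \<Rightarrow> 'a \<Rightarrow> 'r::comm_ring_1) \<Rightarrow> ('a \<Rightarrow> 'a \<Rightarrow> 'r) \<Rightarrow> ('a \<Rightarrow> 'a \<Rightarrow> 'r)"
  assumes lf: "\<And>p q::'a. finite {p..q}" and bd: "additive_biderivation b"
    and I: "A \<in> incidence_algebra" "B \<in> incidence_algebra"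
    and comm: "inc_mult A B = inc_mult B A"
    and nz: "b A B p q \<noteq> 0"
  shows "is_minimal_elem p \<and> is_maximal_elem q"
proof
  have KI: "b A B \<in> incidence_algebra" using bd_in[OF bd I] .
  show "is_maximal_elem q"
  proof (rule ccontr)
    assume "\<not> is_maximal_elem q"
    then obtain c where qc: "q \<le> c" "c \<noteq> q" unfolding is_maximal_elem_def by auto
    have e1: "inc_mult (scaled_unit 1 q c) (scaled_unit 1 c c) = scaled_unit 1 q c"
      by (rule ext, rule ext, subst mult_unit_right[OF lf]) (use qc unit_in in \<open>auto simp: scaled_unit_def\<close>)
    have e2: "inc_mult (scaled_unit 1 c c) (scaled_unit 1 q c) = (\<lambda>_ _. 0)"
      by (rule ext, rule ext, subst mult_unit_left[OF lf]) (use qc unit_in in \<open>auto simp: scaled_unit_def\<close>)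
    have "inc_mult (b A B) (inc_mult (scaled_unit 1 q c) (scaled_unit 1 c c)) p c -
          inc_mult (b A B) (inc_mult (scaled_unit 1 c c) (scaled_unit 1 q c)) p c = 0"
      using bresar[OF lf bd I(1) unit_in[of q c 1] I(2) unit_in[of c c 1], of p c] qc comm by simp
    then have "inc_mult (b A B) (scaled_unit 1 q c) p c = 0" unfolding e1 e2 mult_zero_right by simp
    then show False using nz mult_unit_right[OF lf qc(1) KI, of 1 p c] by simp
  qed
  show "is_minimal_elem p"
  proof (rule ccontr)
    assume "\<not> is_minimal_elem p"
    then obtain c where qc: "c \<le> p" "c \<noteq> p" unfolding is_minimal_elem_def by auto
    have e1: "inc_mult (scaled_unit 1 c c) (scaled_unit 1 c p) = scaled_unit 1 c p"
      by (rule ext, rule ext, subst mult_unit_left[OF lf]) (use qc unit_in in \<open>auto simp: scaled_unit_def\<close>)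
    have e2: "inc_mult (scaled_unit 1 c p) (scaled_unit 1 c c) = (\<lambda>_ _. 0)"
      by (rule ext, rule ext, subst mult_unit_right[OF lf]) (use qc unit_in in \<open>auto simp: scaled_unit_def\<close>)
    have "inc_mult (inc_mult (scaled_unit 1 c c) (scaled_unit 1 c p)) (b A B) c q -
          inc_mult (inc_mult (scaled_unit 1 c p) (scaled_unit 1 c c)) (b A B) c q = 0"
      using bresar[OF lf bd unit_in[of c c 1] I(1) unit_in[of c p 1] I(2), of c q] qc comm by simp
    then have "inc_mult (scaled_unit 1 c p) (b A B) c q = 0" unfolding e1 e2 mult_zero_left by simp
    then show False using nz mult_unit_left[OF lf qc(1) KI, of 1 c q] by simp
  qed
qed


lemma unit_idL:
  fixes x y :: "'a::order"
  assumes lf: "\<And>p q::'a. finite {p..q}" and "x \<le> y"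
  shows "inc_mult (scaled_unit (1::'r::comm_ring_1) x x) (scaled_unit r x y) = scaled_unit r x y"
  by (rule ext, rule ext, subst mult_unit_left[OF lf]) (use assms unit_in in \<open>auto simp: scaled_unit_def\<close>)
lemma unit_idR:
  fixes x y :: "'a::order"
  assumes lf: "\<And>p q::'a. finite {p..q}" and "x \<le> y"
  shows "inc_mult (scaled_unit r x y) (scaled_unit (1::'r::comm_ring_1) y y) = scaled_unit r x y"
  by (rule ext, rule ext, subst mult_unit_right[OF lf]) (use assms unit_in in \<open>auto simp: scaled_unit_def\<close>)

context
  fixes b :: "('a::order \<Rightarrow> 'a \<Rightarrow> 'r::comm_ring_1) \<Rightarrow> ('a \<Rightarrow> 'a \<Rightarrow> 'r) \<Rightarrow> ('a \<Rightarrow> 'a \<Rightarrow> 'r)"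
  assumes lf: "\<And>p q::'a. finite {p..q}" and bd: "additive_biderivation b"
begin

lemma dec1:
  assumes xy: "x \<le> y" and BI: "\<beta> \<in> incidence_algebra" and ax: "a \<noteq> x"
  shows "b (scaled_unit r1 x y) \<beta> a c = (if c = y then b (scaled_unit 1 x x) \<beta> a x * r1 else 0)"
proof -
  have "b (scaled_unit r1 x y) \<beta> = b (inc_mult (scaled_unit 1 x x) (scaled_unit r1 x y)) \<beta>"
    by (subst unit_idL[OF lf xy]) (rule refl)
  also have "\<dots> = inc_add (inc_mult (scaled_unit 1 x x) (b (scaled_unit r1 x y) \<beta>)) (inc_mult (b (scaled_unit 1 x x) \<beta>) (scaled_unit r1 x y))"
    by (rule bd_L[OF bd]) (use xy BI unit_in in auto)
  finally have E: "b (scaled_unit r1 x y) \<beta> = inc_add (inc_mult (scaled_unit 1 x x) (b (scaled_unit r1 x y) \<beta>)) (inc_mult (b (scaled_unit 1 x x) \<beta>) (scaled_unit r1 x y))" .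
  show ?thesis
    using E[THEN fun_cong, THEN fun_cong, of a c] ax mult_unit_left[where p=x and q=x and K="b (scaled_unit r1 x y) \<beta>" and r="1" and a=a and c=c, OF lf order_refl bd_in[OF bd unit_in[OF xy] BI]]
       mult_unit_right[where p=x and q=y and K="b (scaled_unit 1 x x) \<beta>" and r="r1" and a=a and c=c, OF lf xy bd_in[OF bd unit_in[OF order_refl] BI]]
    by (simp add: inc_add_def)
qed

lemma dec2:
  assumes xy: "x \<le> y" and BI: "\<beta> \<in> incidence_algebra" and cy: "c \<noteq> y"
  shows "b (scaled_unit r1 x y) \<beta> a c = (if a = x then r1 * b (scaled_unit 1 y y) \<beta> y c else 0)"
proof -
  have "b (scaled_unit r1 x y) \<beta> = b (inc_mult (scaled_unit r1 x y) (scaled_unit 1 y y)) \<beta>"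
    by (subst unit_idR[OF lf xy]) (rule refl)
  also have "\<dots> = inc_add (inc_mult (scaled_unit r1 x y) (b (scaled_unit 1 y y) \<beta>)) (inc_mult (b (scaled_unit r1 x y) \<beta>) (scaled_unit 1 y y))"
    by (rule bd_L[OF bd]) (use xy BI unit_in in auto)
  finally have E: "b (scaled_unit r1 x y) \<beta> = inc_add (inc_mult (scaled_unit r1 x y) (b (scaled_unit 1 y y) \<beta>)) (inc_mult (b (scaled_unit r1 x y) \<beta>) (scaled_unit 1 y y))" .
  show ?thesis
    using E[THEN fun_cong, THEN fun_cong, of a c] cy mult_unit_right[where p=y and q=y and K="b (scaled_unit r1 x y) \<beta>" and r="1" and a=a and c=c, OF lf order_refl bd_in[OF bd unit_in[OF xy] BI]]
       mult_unit_left[where p=x and q=y and K="b (scaled_unit 1 y y) \<beta>" and r="r1" and a=a and c=c, OF lf xy bd_in[OF bd unit_in[OF order_refl] BI]]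
    by (simp add: inc_add_def)
qed

lemma dec3:
  assumes uv: "u \<le> v" and AI: "\<alpha> \<in> incidence_algebra" and au: "a \<noteq> u"
  shows "b \<alpha> (scaled_unit r2 u v) a c = (if c = v then b \<alpha> (scaled_unit 1 u u) a u * r2 else 0)"
proof -
  have "b \<alpha> (scaled_unit r2 u v) = b \<alpha> (inc_mult (scaled_unit 1 u u) (scaled_unit r2 u v))"
    by (subst unit_idL[OF lf uv]) (rule refl)
  also have "\<dots> = inc_add (inc_mult (scaled_unit 1 u u) (b \<alpha> (scaled_unit r2 u v))) (inc_mult (b \<alpha> (scaled_unit 1 u u)) (scaled_unit r2 u v))"
    by (rule bd_R[OF bd]) (use uv AI unit_in in auto)
  finally have E: "b \<alpha> (scaled_unit r2 u v) = inc_add (inc_mult (scaled_unit 1 u u) (b \<alpha> (scaled_unit r2 u v))) (inc_mult (b \<alpha> (scaled_unit 1 u u)) (scaled_unit r2 u v))" .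
  show ?thesis
    using E[THEN fun_cong, THEN fun_cong, of a c] au mult_unit_left[where p=u and q=u and K="b \<alpha> (scaled_unit r2 u v)" and r="1" and a=a and c=c, OF lf order_refl bd_in[OF bd AI unit_in[OF uv]]]
       mult_unit_right[where p=u and q=v and K="b \<alpha> (scaled_unit 1 u u)" and r="r2" and a=a and c=c, OF lf uv bd_in[OF bd AI unit_in[OF order_refl]]]
    by (simp add: inc_add_def)
qed

lemma dec4:
  assumes uv: "u \<le> v" and AI: "\<alpha> \<in> incidence_algebra" and cv: "c \<noteq> v"
  shows "b \<alpha> (scaled_unit r2 u v) a c = (if a = u then r2 * b \<alpha> (scaled_unit 1 v v) v c else 0)"
proof -
  have "b \<alpha> (scaled_unit r2 u v) = b \<alpha> (inc_mult (scaled_unit r2 u v) (scaled_unit 1 v v))"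
    by (subst unit_idR[OF lf uv]) (rule refl)
  also have "\<dots> = inc_add (inc_mult (scaled_unit r2 u v) (b \<alpha> (scaled_unit 1 v v))) (inc_mult (b \<alpha> (scaled_unit r2 u v)) (scaled_unit 1 v v))"
    by (rule bd_R[OF bd]) (use uv AI unit_in in auto)
  finally have E: "b \<alpha> (scaled_unit r2 u v) = inc_add (inc_mult (scaled_unit r2 u v) (b \<alpha> (scaled_unit 1 v v))) (inc_mult (b \<alpha> (scaled_unit r2 u v)) (scaled_unit 1 v v))" .
  show ?thesis
    using E[THEN fun_cong, THEN fun_cong, of a c] cv mult_unit_right[where p=v and q=v and K="b \<alpha> (scaled_unit r2 u v)" and r="1" and a=a and c=c, OF lf order_refl bd_in[OF bd AI unit_in[OF uv]]]
       mult_unit_left[where p=u and q=v and K="b \<alpha> (scaled_unit 1 v v)" and r="r2" and a=a and c=c, OF lf uv bd_in[OF bd AI unit_in[OF order_refl]]]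
    by (simp add: inc_add_def)
qed

lemma unit_comm:
  assumes "p \<le> q" "s \<le> t" "q \<noteq> s" "t \<noteq> p"
  shows "inc_mult (scaled_unit r p q) (scaled_unit r' s t) = inc_mult (scaled_unit r' s t) (scaled_unit (r::'r) (p::'a) q)"
proof (rule ext, rule ext)
  fix a c
  show "inc_mult (scaled_unit r p q) (scaled_unit r' s t) a c = inc_mult (scaled_unit r' s t) (scaled_unit r p q) a c"
    using mult_unit_left[where p=p and q=q and K="scaled_unit r' s t" and r=r and a=a and c=c, OF lf assms(1) unit_in[OF assms(2)]]
      mult_unit_left[where p=s and q=t and K="scaled_unit r p q" and r=r' and a=a and c=c, OF lf assms(2) unit_in[OF assms(1)]]
      assms by (simp add: scaled_unit_def)
qed

lemma mm:
  assumes "A \<in> incidence_algebra" "B \<in> incidence_algebra" "inc_mult A B = inc_mult B A" "b A B p q \<noteq> 0"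
  shows "is_minimal_elem p \<and> is_maximal_elem q"
  by (rule minmax[OF lf bd assms])

lemma zero_gen:
  fixes x y u v :: 'a
  assumes xy: "x \<le> y" and uv: "u \<le> v" and xv: "x \<noteq> v" and yu: "y \<noteq> u"
    and nb: "\<not> (x = u \<and> y = v)"
    and exc: "\<not> (x = y \<and> u = v \<and> x \<noteq> u \<and>
            ((is_maximal_elem x \<and> is_minimal_elem u) \<or> (is_minimal_elem x \<and> is_maximal_elem u)))"
  shows "b (scaled_unit r1 x y) (scaled_unit r2 u v) = (\<lambda>_ _. 0)"
proof (rule ext, rule ext, rule ccontr)
  fix a c
  define \<alpha> where "\<alpha> = scaled_unit r1 x y"
  define \<beta> where "\<beta> = scaled_unit r2 u v"
  have AI: "\<alpha> \<in> incidence_algebra" and BI: "\<beta> \<in> incidence_algebra"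
    unfolding \<alpha>_def \<beta>_def using xy uv unit_in by auto
  assume nz: "b (scaled_unit r1 x y) (scaled_unit r2 u v) a c \<noteq> 0"
  have ac: "is_minimal_elem a \<and> is_maximal_elem c"
    by (rule mm[OF unit_in[OF xy] unit_in[OF uv] unit_comm[OF xy uv yu xv[symmetric]] nz])
  have maxle: "\<And>p q::'a. is_maximal_elem p \<Longrightarrow> p \<le> q \<Longrightarrow> q = p" by (simp add: is_maximal_elem_def)
  have minle: "\<And>p q::'a. is_minimal_elem q \<Longrightarrow> p \<le> q \<Longrightarrow> p = q" by (simp add: is_minimal_elem_def)
  have G1: "\<And>p q. x \<noteq> u \<Longrightarrow> b (scaled_unit 1 x x) \<beta> p q \<noteq> 0 \<Longrightarrow> is_minimal_elem p \<and> is_maximal_elem q"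
    unfolding \<beta>_def by (rule mm[OF unit_in[OF order_refl] unit_in[OF uv] unit_comm[OF order_refl uv]]) (use xv in auto)
  have G2: "\<And>p q. y \<noteq> v \<Longrightarrow> b (scaled_unit 1 y y) \<beta> p q \<noteq> 0 \<Longrightarrow> is_minimal_elem p \<and> is_maximal_elem q"
    unfolding \<beta>_def by (rule mm[OF unit_in[OF order_refl] unit_in[OF uv] unit_comm[OF order_refl uv]]) (use yu in auto)
  have H1: "\<And>p q. x \<noteq> u \<Longrightarrow> b \<alpha> (scaled_unit 1 u u) p q \<noteq> 0 \<Longrightarrow> is_minimal_elem p \<and> is_maximal_elem q"
    unfolding \<alpha>_def by (rule mm[OF unit_in[OF xy] unit_in[OF order_refl] unit_comm[OF xy order_refl]]) (use yu in auto)
  have H2: "\<And>p q. y \<noteq> v \<Longrightarrow> b \<alpha> (scaled_unit 1 v v) p q \<noteq> 0 \<Longrightarrow> is_minimal_elem p \<and> is_maximal_elem q"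
    unfolding \<alpha>_def by (rule mm[OF unit_in[OF xy] unit_in[OF order_refl] unit_comm[OF xy order_refl]]) (use xv in auto)
  have d1: "a \<noteq> x \<Longrightarrow> b \<alpha> \<beta> a c = (if c = y then b (scaled_unit 1 x x) \<beta> a x * r1 else 0)"
    unfolding \<alpha>_def by (rule dec1[OF xy BI])
  have d2: "c \<noteq> y \<Longrightarrow> b \<alpha> \<beta> a c = (if a = x then r1 * b (scaled_unit 1 y y) \<beta> y c else 0)"
    unfolding \<alpha>_def by (rule dec2[OF xy BI])
  have d3: "a \<noteq> u \<Longrightarrow> b \<alpha> \<beta> a c = (if c = v then b \<alpha> (scaled_unit 1 u u) a u * r2 else 0)"
    unfolding \<beta>_def by (rule dec3[OF uv AI])
  have d4: "c \<noteq> v \<Longrightarrow> b \<alpha> \<beta> a c = (if a = u then r2 * b \<alpha> (scaled_unit 1 v v) v c else 0)"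
    unfolding \<beta>_def by (rule dec4[OF uv AI])
  have nz': "b \<alpha> \<beta> a c \<noteq> 0" using nz unfolding \<alpha>_def \<beta>_def .
  show False
  proof (cases "x = u")
    case True
    then have yv: "y \<noteq> v" using nb by auto
    have "c = y"
    proof (rule ccontr)
      assume cy: "c \<noteq> y"
      then have "a = x" "b (scaled_unit 1 y y) \<beta> y c \<noteq> 0" using d2 nz' by (auto split: if_splits)
      then have "is_minimal_elem y" using G2 yv by blast
      then show False using minle xy yu True by blast
    qed
    moreover have "c = v"
    proof (rule ccontr)
      assume cv: "c \<noteq> v"
      then have "a = u" "b \<alpha> (scaled_unit 1 v v) v c \<noteq> 0" using d4 nz' by (auto split: if_splits)
      then have "is_minimal_elem v" using H2 yv by blast
      then show False using minle uv xv True by blast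
    qed
    ultimately show False using yv by simp
  next
    case xu: False
    show False
    proof (cases "a = x")
      case ax: False
      then have cy: "c = y" and g: "b (scaled_unit 1 x x) \<beta> a x \<noteq> 0" using d1 nz' by (auto split: if_splits)
      then have "is_maximal_elem x" using G1 xu by blast
      then have yx: "y = x" using maxle xy by blast
      show False
      proof (cases "a = u")
        case False
        then have "c = v" using d3 nz' by (auto split: if_splits)
        then have "y = v" using cy by simp
        then show False using yx xv by simp
      next
        case au: True
        have "c \<noteq> v" using cy yx xv by simp
        then have "b \<alpha> (scaled_unit 1 v v) v c \<noteq> 0" using d4 nz' au by (auto split: if_splits)
        moreover have "y \<noteq> v" using yx xv by simp
        ultimately have "is_minimal_elem v" using H2 by blast
        then have "u = v" using minle uv by blast
        then show False using exc yx xu ac au cy \<open>is_maximal_elem x\<close> by auto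
      qed
    next
      case ax: True
      have au: "a \<noteq> u" using ax xu by simp
      then have cv: "c = v" and h: "b \<alpha> (scaled_unit 1 u u) a u \<noteq> 0" using d3 nz' by (auto split: if_splits)
      then have "is_maximal_elem u" using H1 xu by blast
      then have vu: "v = u" using maxle uv by blast
      show False
      proof (cases "c = y")
        case True
        then show False using cv vu yu by simp
      next
        case False
        then have "b (scaled_unit 1 y y) \<beta> y c \<noteq> 0" using d2 nz' ax by (auto split: if_splits)
        moreover have "y \<noteq> v" using False cv by simp
        ultimately have "is_minimal_elem y" using G2 by blast
        then have "x = y" using minle xy by blast
        then show False using exc vu xu ac ax cv \<open>is_maximal_elem u\<close> by auto
      qed
    qed
  qed
qed

lemma zero_same:
  fixes x y :: 'a
  assumes xy: "x \<le> y" and xny: "x \<noteq> y"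
    and mid: "is_minimal_elem x \<Longrightarrow> is_maximal_elem y \<Longrightarrow> \<exists>z. x \<le> z \<and> z \<le> y \<and> z \<noteq> x \<and> z \<noteq> y"
  shows "b (scaled_unit r1 x y) (scaled_unit r2 x y) = (\<lambda>_ _. 0)"
proof (rule ext, rule ext, rule ccontr)
  fix a c
  define \<alpha> where "\<alpha> = scaled_unit r1 x y"
  define \<beta> where "\<beta> = scaled_unit r2 x y"
  have AI: "\<alpha> \<in> incidence_algebra" and BI: "\<beta> \<in> incidence_algebra"
    unfolding \<alpha>_def \<beta>_def using xy unit_in by auto
  assume nz: "b (scaled_unit r1 x y) (scaled_unit r2 x y) a c \<noteq> 0"
  have ac: "is_minimal_elem a \<and> is_maximal_elem c"
    by (rule mm[OF unit_in[OF xy] unit_in[OF xy] unit_comm[OF xy xy xny[symmetric] xny[symmetric]] nz])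
  have nz': "b \<alpha> \<beta> a c \<noteq> 0" using nz unfolding \<alpha>_def \<beta>_def .
  have ex: "a = x"
  proof (rule ccontr)
    assume ax: "a \<noteq> x"
    have E: "b (scaled_unit 1 x x) \<beta> = inc_add (inc_mult (scaled_unit 1 x x) (b (scaled_unit 1 x x) \<beta>)) (inc_mult (b (scaled_unit 1 x x) (scaled_unit 1 x x)) \<beta>)"
      unfolding \<beta>_def
      by (subst (1) unit_idL[OF lf xy, symmetric], rule bd_R[OF bd]) (use xy unit_in in auto)
    have "b (scaled_unit 1 x x) \<beta> a x = 0"
      using E[THEN fun_cong, THEN fun_cong, of a x] ax xny
        mult_unit_left[where p=x and q=x and K="b (scaled_unit 1 x x) \<beta>" and r=1 and a=a and c=x, OF lf order_refl bd_in[OF bd unit_in[OF order_refl] BI]]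
        mult_unit_right[where p=x and q=y and K="b (scaled_unit 1 x x) (scaled_unit 1 x x)" and r=r2 and a=a and c=x, OF lf xy bd_in[OF bd unit_in[OF order_refl] unit_in[OF order_refl]]]
      by (simp add: inc_add_def \<beta>_def)
    then show False using dec1[OF xy BI ax, of r1 c] nz' unfolding \<alpha>_def by (simp split: if_splits)
  qed
  have ey: "c = y"
  proof (rule ccontr)
    assume cy: "c \<noteq> y"
    have E: "b (scaled_unit 1 y y) \<beta> = inc_add (inc_mult \<beta> (b (scaled_unit 1 y y) (scaled_unit 1 y y))) (inc_mult (b (scaled_unit 1 y y) \<beta>) (scaled_unit 1 y y))"
      unfolding \<beta>_def
      by (subst (1) unit_idR[OF lf xy, symmetric], rule bd_R[OF bd]) (use xy unit_in in auto)
    have "b (scaled_unit 1 y y) \<beta> y c = 0"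
      using E[THEN fun_cong, THEN fun_cong, of y c] cy xny
        mult_unit_right[where p=y and q=y and K="b (scaled_unit 1 y y) \<beta>" and r=1 and a=y and c=c, OF lf order_refl bd_in[OF bd unit_in[OF order_refl] BI]]
        mult_unit_left[where p=x and q=y and K="b (scaled_unit 1 y y) (scaled_unit 1 y y)" and r=r2 and a=y and c=c, OF lf xy bd_in[OF bd unit_in[OF order_refl] unit_in[OF order_refl]]]
      by (simp add: inc_add_def \<beta>_def)
    then show False using dec2[OF xy BI cy, of r1 a] nz' ex unfolding \<alpha>_def by simp
  qed
  obtain z where z: "x \<le> z" "z \<le> y" "z \<noteq> x" "z \<noteq> y" using mid ac ex ey by blast
  have split: "\<alpha> = inc_mult (scaled_unit r1 x z) (scaled_unit 1 z y)"
    by (rule ext, rule ext, subst mult_unit_right[OF lf z(2) unit_in[OF z(1)]]) (auto simp: scaled_unit_def \<alpha>_def)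
  have "b \<alpha> \<beta> = inc_add (inc_mult (scaled_unit r1 x z) (b (scaled_unit 1 z y) \<beta>)) (inc_mult (b (scaled_unit r1 x z) \<beta>) (scaled_unit 1 z y))"
    unfolding split by (rule bd_L[OF bd]) (use z unit_in BI in auto)
  also have "b (scaled_unit 1 z y) \<beta> = (\<lambda>_ _. 0)"
    unfolding \<beta>_def by (rule zero_gen) (use z xy xny in auto)
  also have "b (scaled_unit r1 x z) \<beta> = (\<lambda>_ _. 0)"
    unfolding \<beta>_def by (rule zero_gen) (use z xy xny in auto)
  finally have "b \<alpha> \<beta> = (\<lambda>_ _. 0)" by (simp add: mult_zero_left mult_zero_right inc_add_def)
  then show False using nz' by simp
qed

end

lemma mid_lemma:
  fixes x y :: "'a::order"
  assumes ch: "\<forall>C::'a set. maximal_chain C \<longrightarrow> has_three_elements C"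
    and xy: "x \<le> y" "x \<noteq> y" and mn: "is_minimal_elem x" and mx: "is_maximal_elem y"
  shows "\<exists>z. x \<le> z \<and> z \<le> y \<and> z \<noteq> x \<and> z \<noteq> y"
proof (rule ccontr)
  assume no: "\<not> ?thesis"
  have "maximal_chain {x, y}"
    unfolding maximal_chain_def
  proof
    show "Complete_Partial_Order.chain (\<le>) {x, y}" using xy by (auto simp: chain_def)
    show "\<forall>z. Complete_Partial_Order.chain (\<le>) (insert z {x, y}) \<longrightarrow> z \<in> {x, y}"
    proof (intro allI impI)
      fix z assume "Complete_Partial_Order.chain (\<le>) (insert z {x, y})"
      then have "z \<le> x \<or> x \<le> z" "z \<le> y \<or> y \<le> z" by (auto simp: chain_def)
      then show "z \<in> {x, y}" using no mn mx unfolding is_minimal_elem_def is_maximal_elem_def by auto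
    qed
  qed
  then have "has_three_elements {x, y}" using ch by blast
  then show False unfolding has_three_elements_def by auto
qed

theorem mainTheorem12:
  fixes b :: "('a::order \<Rightarrow> 'a \<Rightarrow> 'r::comm_ring_1) \<Rightarrow> ('a \<Rightarrow> 'a \<Rightarrow> 'r) \<Rightarrow> ('a \<Rightarrow> 'a \<Rightarrow> 'r)"
    and r1 r2 :: 'r and x y u v :: 'a
  assumes "connected_poset TYPE('a)"
    and "locally_finite_poset TYPE('a)"
    and "\<forall>C::'a set. maximal_chain C \<longrightarrow> has_three_elements C"
    and "additive_biderivation b"
    and "x \<le> y" and "u \<le> v"
    and "\<forall>p\<in>{x,y,u,v}. \<forall>q\<in>{x,y,u,v}. comparable p q"
    and "x \<noteq> v" and "y \<noteq> u"
    and "\<not> (x = y \<and> u = v \<and> x \<noteq> u \<and>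
            ((is_maximal_elem x \<and> is_minimal_elem u) \<or> (is_minimal_elem x \<and> is_maximal_elem u)))"
  shows "b (scaled_unit r1 x y) (scaled_unit r2 u v) = (\<lambda>_ _. 0)"
proof -
  have lf: "\<And>p q::'a. finite {p..q}" using assms(2) by (simp add: locally_finite_poset_def)
  show ?thesis
  proof (cases "x = u \<and> y = v")
    case True
    then show ?thesis
      using zero_same[OF lf assms(4) assms(5), of r1 r2] mid_lemma[OF assms(3) assms(5)] assms(8) by auto
  next
    case False
    then show ?thesis using zero_gen[OF lf assms(4) assms(5) assms(6) assms(8) assms(9) False assms(10)] by simp
  qed
qed

end
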